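(* Let $n,m$ be positive integers with $m$ even. If $n$ and $m$ are sufficiently large, then the zero-error (Las Vegas) randomized query complexity of $g_{n,m}$ satisfies $R_0(g_{n,m})=\Omega(nm)$.
   Context: Let $n,m$ be positive integers with $m$ even, $M=[n]\times[m]$ (a grid of cells with $n$ rows and $m$ columns), $\tilde M = M\cup\{\bot\}$ (pointers to cells, $\bot$ is the null pointer). Let $T$ be the following fixed binary tree with $m$ leaves and $m-1$ internal nodes: if $m=2^k$, $T$ is the complete binary tree with $2^k$ leaves; if $2^k<m<2^{k+1}$, take the complete binary tree with $2^k$ leaves and add a pair of children to each of its $m-2^k$ leftmost leaves. Outgoing arcs of internal nodes are labeled 'left' and 'right', leaves are labeled $1,\dots,m$ from left to right, and $T(j)$ is the sequence of 'left'/'right' labels on the root-to-leaf-$j$ path. The input alphabet is $\Sigma=\{0,1\}\times\tilde M\times\tilde M\times\tilde M$; for $v\in\Sigma$ its components are $\mathrm{val}(v),\mathrm{lpoint}(v),\mathrm{rpoint}(v),\mathrm{bpoint}(v)$. The function $g_{n,m}\colon\Sigma^M\to\{0,1\}$ is defined by $g_{n,m}(x)=1$ iff: (1) there is exactly one column $b\in[m]$ with $\mathrm{val}(x_{i,b})=1$ for all $i\in[n]$ (the marked column); (2) in column $b$ there is a unique cell $a$ with $x_a\ne(1,\bot,\bot,\bot)$ (the special element); (3) for each column $j\in[m]\setminus\{b\}$, the path starting at $a$ and following $\mathrm{lpoint},\mathrm{rpoint}$ as specified by $T(j)$ exists (no pointer on it is $\bot$) and ends in a cell $\ell_j$ in column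 $j$ with $\mathrm{val}(x_{\ell_j})=0$; (4') the set $G=\{j\in[m]\setminus\{b\} : \mathrm{bpoint}(x_{\ell_j})=a\}$ has size exactly $m/2$. A query asks for the value $x_c\in\Sigma$ of one cell $c\in M$. $R_0(f)$ is the minimum, over randomized decision trees (distributions over deterministic decision trees) all of whose trees in the support compute $f$, of the maximum over inputs of the expected number of queries. *)

theory Defs
  imports "HOL-Probability.Probability"
begin

type_synonym cell = "nat \<times> nat"   (* (row, column) *)
type_synonym ptr = "cell option"     (* None = the null pointer \<bottom> *)
(* a letter: (val, lpoint, rpoint, bpoint); val True means 1, False means 0 *)
type_synonym sym = "bool \<times> ptr \<times> ptr \<times> ptr"

definition val :: "sym \<Rightarrow> bool" where "val v = fst v"
definition lpoint :: "sym \<Rightarrow> ptr" where "lpoint v = fst (snd v)"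
definition rpoint :: "sym \<Rightarrow> ptr" where "rpoint v = fst (snd (snd v))"
definition bpoint :: "sym \<Rightarrow> ptr" where "bpoint v = snd (snd (snd v))"

definition grid :: "nat \<Rightarrow> nat \<Rightarrow> cell set" where
  "grid n m = {1..n} \<times> {1..m}"

definition valid_ptr :: "nat \<Rightarrow> nat \<Rightarrow> ptr \<Rightarrow> bool" where
  "valid_ptr n m p = (case p of None \<Rightarrow> True | Some c \<Rightarrow> c \<in> grid n m)"

definition one_null :: sym where "one_null = (True, None, None, None)"

(* Inputs x \<in> \<Sigma>^M, represented as functions on all cells that are fixed
   (to a dummy value) outside M, with all pointers in M \<union> {\<bottom>}. *)
definition inputs :: "nat \<Rightarrow> nat \<Rightarrow> (cell \<Rightarrow> sym) set" where
  "inputs n m = {x. (\<forall>c \<in> grid n m. valid_ptr n m (lpoint (x c)) \<and>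
                       valid_ptr n m (rpoint (x c)) \<and> valid_ptr n m (bpoint (x c)))
                  \<and> (\<forall>c. c \<notin> grid n m \<longrightarrow> x c = (False, None, None, None))}"

datatype btree = BLeaf | BNode btree btree

fun complete :: "nat \<Rightarrow> btree" where
  "complete 0 = BLeaf"
| "complete (Suc k) = BNode (complete k) (complete k)"

(* root-to-leaf label sequences, leaves from left to right; False = 'left', True = 'right' *)
fun leaf_paths :: "btree \<Rightarrow> bool list list" where
  "leaf_paths BLeaf = [[]]"
| "leaf_paths (BNode l r) = map (Cons False) (leaf_paths l) @ map (Cons True) (leaf_paths r)"

definition tlog :: "nat \<Rightarrow> nat" where
  "tlog m = (GREATEST k. 2 ^ k \<le> m)"

(* Leaf paths of T: complete tree with 2^k leaves (2^k \<le> m < 2^(k+1)), with a pair of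
   children added to each of its m - 2^k leftmost leaves. *)
definition T_paths :: "nat \<Rightarrow> bool list list" where
  "T_paths m = (let k = tlog m; r = m - 2 ^ k; ps = leaf_paths (complete k) in
     concat (map (\<lambda>i. if i < r then [ps ! i @ [False], ps ! i @ [True]] else [ps ! i])
                 [0..<length ps]))"

definition Tpath :: "nat \<Rightarrow> nat \<Rightarrow> bool list" where
  "Tpath m j = T_paths m ! (j - 1)"

fun follow :: "(cell \<Rightarrow> sym) \<Rightarrow> cell \<Rightarrow> bool list \<Rightarrow> cell option" where
  "follow x a [] = Some a"
| "follow x a (d # ds) =
     (case (if d then rpoint (x a) else lpoint (x a)) of
        None \<Rightarrow> None
      | Some c \<Rightarrow> follow x c ds)"

definition marked_col :: "nat \<Rightarrow> (cell \<Rightarrow> sym) \<Rightarrow> nat \<Rightarrow> bool" where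
  "marked_col n x b = (\<forall>i \<in> {1..n}. val (x (i, b)))"

definition g :: "nat \<Rightarrow> nat \<Rightarrow> (cell \<Rightarrow> sym) \<Rightarrow> bool" where
  "g n m x = (\<exists>b a.
     \<comment> \<open>(1) b is the unique marked column\<close>
     b \<in> {1..m} \<and> marked_col n x b \<and> (\<forall>b' \<in> {1..m}. marked_col n x b' \<longrightarrow> b' = b) \<and>
     \<comment> \<open>(2) a is the unique special element of column b\<close>
     a \<in> grid n m \<and> snd a = b \<and> x a \<noteq> one_null \<and>
     (\<forall>a' \<in> grid n m. snd a' = b \<and> x a' \<noteq> one_null \<longrightarrow> a' = a) \<and>
     \<comment> \<open>(3) paths to leaves exist and end in val-0 cells of the right column\<close>
     (\<forall>j \<in> {1..m} - {b}. \<exists>l. follow x a (Tpath m j) = Some l \<and> snd l = j \<and> \<not> val (x l)) \<and>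
     \<comment> \<open>(4') exactly m/2 back pointers to a\<close>
     card {j \<in> {1..m} - {b}. bpoint (x (the (follow x a (Tpath m j)))) = Some a} = m div 2)"

datatype dtree = DLeaf bool | DQuery cell "sym \<Rightarrow> dtree"

primrec dt_eval :: "dtree \<Rightarrow> (cell \<Rightarrow> sym) \<Rightarrow> bool" where
  "dt_eval (DLeaf b) x = b"
| "dt_eval (DQuery c f) x = dt_eval (f (x c)) x"

primrec dt_cost :: "dtree \<Rightarrow> (cell \<Rightarrow> sym) \<Rightarrow> nat" where
  "dt_cost (DLeaf b) x = 0"
| "dt_cost (DQuery c f) x = Suc (dt_cost (f (x c)) x)"

definition R0 :: "(cell \<Rightarrow> sym) set \<Rightarrow> ((cell \<Rightarrow> sym) \<Rightarrow> bool) \<Rightarrow> ennreal" where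
  "R0 X f = (INF D \<in> {D :: dtree pmf. \<forall>t \<in> set_pmf D. \<forall>x \<in> X. dt_eval t x = f x}.
               SUP x \<in> X. \<integral>\<^sup>+ t. ennreal (real (dt_cost t x)) \<partial>(measure_pmf D))"

end

theory Submission
  imports Defs
begin


primrec qs :: "dtree \<Rightarrow> (cell \<Rightarrow> sym) \<Rightarrow> cell list" where
  "qs (DLeaf b) x = []"
| "qs (DQuery c f) x = c # qs (f (x c)) x"

lemma length_qs: "length (qs t x) = dt_cost t x"
  by (induction t) auto

lemma qs_agree:
  "(\<forall>c\<in>set (qs t x). y c = x c) \<Longrightarrow> dt_eval t y = dt_eval t x"
  by (induction t) auto

definition zc :: sym where "zc = (False, None, None, None)"

definition X :: "nat \<Rightarrow> nat \<Rightarrow> (nat \<Rightarrow> nat) \<Rightarrow> cell \<Rightarrow> sym" where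
  "X n m z c = (if c \<in> grid n m then (if fst c = z (snd c) then zc else one_null) else zc)"

lemma count_lemma:
  assumes "finite Z" "finite U" "U \<subseteq> {1..m}"
    "\<forall>z\<in>Z. \<forall>j. j \<notin> U \<longrightarrow> z j = w j"
    "\<forall>z\<in>Z. \<forall>j\<in>U. z j \<in> {1..n}"
  shows "card {z\<in>Z. \<forall>j\<in>U. (z j, j) \<in> set (take K (qs t (X n m z)))} \<le> K choose card U"
  using assms
proof (induction t arbitrary: Z U w K)
  case (DLeaf b)
  show ?case
  proof (cases "U = {}")
    case True
    have "Z \<subseteq> {w}" using DLeaf.prems True by (auto intro!: ext)
    hence "card Z \<le> card {w}" by (rule card_mono[rotated]) simp
    hence "card Z \<le> 1" by simp
    then show ?thesis using True by (simp)
  next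
    case False
    then show ?thesis by auto
  qed
next
  case (DQuery c f)
  show ?case
  proof (cases K)
    case 0
    show ?thesis
    proof (cases "U = {}")
      case True
      have "Z \<subseteq> {w}" using DQuery.prems True by (auto intro!: ext)
      hence "card Z \<le> card {w}" by (rule card_mono[rotated]) simp
      hence "card Z \<le> 1" by simp
      then show ?thesis using True 0 by (simp)
    next
      case False
      then show ?thesis using 0 by auto
    qed
  next
    case (Suc K')
    obtain r j where c: "c = (r, j)" by fastforce
    show ?thesis
    proof (cases "j \<in> U \<and> r \<in> {1..n}")
      case True
      define Z1 where "Z1 = {z\<in>Z. z j = r}"
      define Z2 where "Z2 = {z\<in>Z. z j \<noteq> r}"
      have jm: "j \<in> {1..m}" using True DQuery.prems by auto
      have X1: "X n m z c = zc" if "z \<in> Z1" for z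
        using that True jm unfolding Z1_def X_def grid_def c by auto
      have X2: "X n m z c = one_null" if "z \<in> Z2" for z
        using that True jm unfolding Z2_def X_def grid_def c by auto
      have s1: "{z\<in>Z1. \<forall>j\<in>U. (z j, j) \<in> set (take K (qs (DQuery c f) (X n m z)))}
           \<subseteq> {z\<in>Z1. \<forall>j'\<in>U - {j}. (z j', j') \<in> set (take K' (qs (f zc) (X n m z)))}"
        using X1 Suc c by auto
      have s2: "{z\<in>Z2. \<forall>j\<in>U. (z j, j) \<in> set (take K (qs (DQuery c f) (X n m z)))}
           \<subseteq> {z\<in>Z2. \<forall>j'\<in>U. (z j', j') \<in> set (take K' (qs (f one_null) (X n m z)))}"
        using X2 Suc c unfolding Z2_def by fastforce
      have fZ1: "finite Z1" "finite Z2" using DQuery.prems unfolding Z1_def Z2_def by auto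
      have b1: "card {z\<in>Z1. \<forall>j'\<in>U - {j}. (z j', j') \<in> set (take K' (qs (f zc) (X n m z)))}
                \<le> K' choose card (U - {j})"
        apply (rule DQuery.IH[where w="w(j := r)"])
        using DQuery.prems fZ1 unfolding Z1_def by auto
      have b2: "card {z\<in>Z2. \<forall>j'\<in>U. (z j', j') \<in> set (take K' (qs (f one_null) (X n m z)))}
                \<le> K' choose card U"
        apply (rule DQuery.IH[where w="w"])
        using DQuery.prems fZ1 unfolding Z2_def by auto
      have "{z\<in>Z. \<forall>j\<in>U. (z j, j) \<in> set (take K (qs (DQuery c f) (X n m z)))}
           = {z\<in>Z1. \<forall>j\<in>U. (z j, j) \<in> set (take K (qs (DQuery c f) (X n m z)))}
           \<union> {z\<in>Z2. \<forall>j\<in>U. (z j, j) \<in> set (take K (qs (DQuery c f) (X n m z)))}"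
        unfolding Z1_def Z2_def by auto
      hence "card {z\<in>Z. \<forall>j\<in>U. (z j, j) \<in> set (take K (qs (DQuery c f) (X n m z)))}
          \<le> card {z\<in>Z1. \<forall>j'\<in>U - {j}. (z j', j') \<in> set (take K' (qs (f zc) (X n m z)))}
           + card {z\<in>Z2. \<forall>j'\<in>U. (z j', j') \<in> set (take K' (qs (f one_null) (X n m z)))}"
      proof -
        let ?S1 = "{z\<in>Z1. \<forall>j\<in>U. (z j, j) \<in> set (take K (qs (DQuery c f) (X n m z)))}"
        let ?S2 = "{z\<in>Z2. \<forall>j\<in>U. (z j, j) \<in> set (take K (qs (DQuery c f) (X n m z)))}"
        let ?T1 = "{z\<in>Z1. \<forall>j'\<in>U - {j}. (z j', j') \<in> set (take K' (qs (f zc) (X n m z)))}"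
        let ?T2 = "{z\<in>Z2. \<forall>j'\<in>U. (z j', j') \<in> set (take K' (qs (f one_null) (X n m z)))}"
        have "card ?S1 \<le> card ?T1" by (rule card_mono[OF _ s1]) (use fZ1 in simp)
        moreover have "card ?S2 \<le> card ?T2" by (rule card_mono[OF _ s2]) (use fZ1 in simp)
        moreover have "card (?S1 \<union> ?S2) \<le> card ?S1 + card ?S2" by (rule card_Un_le)
        ultimately show ?thesis unfolding \<open>_ = ?S1 \<union> ?S2\<close> by linarith
      qed
      also have "\<dots> \<le> (K' choose card (U - {j})) + (K' choose card U)" using b1 b2 by simp
      also have "\<dots> = K choose card U"
      proof -
        have "card U = Suc (card (U - {j}))" using True DQuery.prems
          by (metis card_Suc_Diff1)
        then show ?thesis using Suc by simp
      qed
      finally show ?thesis .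
    next
      case False
      have Xc: "X n m z c = X n m w c" if "z \<in> Z" for z
      proof (cases "j \<in> U")
        case True
        then show ?thesis using False that unfolding X_def grid_def c by auto
      next
        case False
        then show ?thesis using that DQuery.prems unfolding X_def grid_def c by auto
      qed
      have s: "{z\<in>Z. \<forall>j\<in>U. (z j, j) \<in> set (take K (qs (DQuery c f) (X n m z)))}
           \<subseteq> {z\<in>Z. \<forall>j'\<in>U. (z j', j') \<in> set (take K' (qs (f (X n m w c)) (X n m z)))}"
        using Xc Suc c False DQuery.prems by fastforce
      have b: "card {z\<in>Z. \<forall>j'\<in>U. (z j', j') \<in> set (take K' (qs (f (X n m w c)) (X n m z)))}
                \<le> K' choose card U"
        by (rule DQuery.IH) (use DQuery.prems in auto)
      have "card {z\<in>Z. \<forall>j\<in>U. (z j, j) \<in> set (take K (qs (DQuery c f) (X n m z)))}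
          \<le> card {z\<in>Z. \<forall>j'\<in>U. (z j', j') \<in> set (take K' (qs (f (X n m w c)) (X n m z)))}"
        by (rule card_mono[OF _ s]) (use DQuery.prems in simp)
      then have "card {z\<in>Z. \<forall>j\<in>U. (z j, j) \<in> set (take K (qs (DQuery c f) (X n m z)))} \<le> K' choose card U"
        using b by linarith
      also have "\<dots> \<le> K choose card U" using Suc by (cases "card U") auto
      finally show ?thesis .
    qed
  qed
qed



lemma leaf_paths_complete:
  "distinct (leaf_paths (complete k)) \<and> set (leaf_paths (complete k)) = {xs. length xs = k}
   \<and> length (leaf_paths (complete k)) = 2 ^ k"
proof (induction k)
  case 0
  then show ?case by auto
next
  case (Suc k)
  have "set (leaf_paths (complete (Suc k))) = {xs. length xs = Suc k}"
  proof
    show "{xs. length xs = Suc k} \<subseteq> set (leaf_paths (complete (Suc k)))"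
    proof
      fix xs :: "bool list" assume "xs \<in> {xs. length xs = Suc k}"
      then obtain d ys where "xs = d # ys" "length ys = k" by (cases xs) auto
      then show "xs \<in> set (leaf_paths (complete (Suc k)))" using Suc by (cases d) auto
    qed
  qed (use Suc in auto)
  then show ?case using Suc by (auto simp: distinct_map inj_on_def)
qed

lemma tlog_props:
  assumes "m \<ge> 1"
  shows "2 ^ tlog m \<le> m" "m < 2 ^ Suc (tlog m)"
proof -
  have bnd: "\<forall>y. 2 ^ y \<le> m \<longrightarrow> y \<le> m"
    by (metis dual_order.trans less_exp order_less_imp_le)
  have "2 ^ 0 \<le> m" using assms by simp
  then show a: "2 ^ tlog m \<le> m" unfolding tlog_def by (rule GreatestI_nat) (use bnd in auto)
  show "m < 2 ^ Suc (tlog m)"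
  proof (rule ccontr)
    assume "\<not> m < 2 ^ Suc (tlog m)"
    hence "Suc (tlog m) \<le> tlog m" unfolding tlog_def
      by (intro Greatest_le_nat[where b=m]) (use bnd in auto)
    then show False by simp
  qed
qed

lemma distinct_concat_map:
  assumes "distinct xs" "\<forall>i\<in>set xs. distinct (f i)"
    "\<forall>i\<in>set xs. \<forall>i'\<in>set xs. i \<noteq> i' \<longrightarrow> set (f i) \<inter> set (f i') = {}"
  shows "distinct (concat (map f xs))"
  using assms by (induction xs) auto

lemma sum_list_split0:
  "sum_list (map (\<lambda>i. if i < r then 2 else 1) [0..<N]) = N + min r (N::nat)"
  by (induction N) auto

lemma sum_list_split:
  "r \<le> N \<Longrightarrow> sum_list (map (\<lambda>i. if i < r then 2 else 1) [0..<N]) = N + (r::nat)"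
  using sum_list_split0[of r N] by simp

lemma T_paths_props:
  assumes "m \<ge> 2"
  defines "k \<equiv> tlog m"
  shows "2 ^ k \<le> m" "length (T_paths m) = m" "distinct (T_paths m)"
    "\<forall>u\<in>set (T_paths m). u \<noteq> [] \<and> length u \<le> Suc k"
    "\<forall>u\<in>set (T_paths m). \<forall>v\<in>set (T_paths m). \<forall>ds. v = u @ ds \<longrightarrow> ds = []"
proof -
  have m1: "m \<ge> 1" using assms by simp
  note tl = tlog_props[OF m1, folded k_def]
  show "2 ^ k \<le> m" using tl by simp
  have k1: "k \<ge> 1"
  proof (rule ccontr)
    assume "\<not> k \<ge> 1" hence "k = 0" by simp
    then show False using tl assms by simp
  qed
  define r where "r = m - 2 ^ k"
  define ps where "ps = leaf_paths (complete k)"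
  have ps: "distinct ps" "set ps = {xs. length xs = k}" "length ps = 2 ^ k"
    using leaf_paths_complete[of k] unfolding ps_def by auto
  have rle: "r \<le> 2 ^ k" using tl unfolding r_def by simp
  define f where "f = (\<lambda>i. if i < r then [ps ! i @ [False], ps ! i @ [True]] else [ps ! i])"
  have TP: "T_paths m = concat (map f [0..<length ps])"
    unfolding T_paths_def Let_def f_def r_def ps_def k_def by simp
  have "length (T_paths m) = sum_list (map (\<lambda>i. if i < r then 2 else 1) [0..<2^k])"
    unfolding TP ps(3) length_concat map_map f_def
    by (intro arg_cong[where f=sum_list] map_cong) auto
  also have "\<dots> = m" using sum_list_split[OF rle] tl unfolding r_def by simp
  finally show "length (T_paths m) = m" .
  have lenps: "\<And>i. i < 2^k \<Longrightarrow> length (ps ! i) = k" using ps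
    by (metis mem_Collect_eq nth_mem)
  have tk: "\<And>i u. i < 2^k \<Longrightarrow> u \<in> set (f i) \<Longrightarrow> take k u = ps ! i"
    unfolding f_def using lenps by (auto split: if_splits)
  show "distinct (T_paths m)"
    unfolding TP
  proof (rule distinct_concat_map)
    show "\<forall>i\<in>set [0..<length ps]. distinct (f i)" unfolding f_def by auto
    show "\<forall>i\<in>set [0..<length ps]. \<forall>i'\<in>set [0..<length ps]. i \<noteq> i' \<longrightarrow> set (f i) \<inter> set (f i') = {}"
    proof (intro ballI impI)
      fix i i' assume "i \<in> set [0..<length ps]" "i' \<in> set [0..<length ps]" "i \<noteq> i'"
      hence ii: "i < 2^k" "i' < 2^k" "ps ! i \<noteq> ps ! i'" using ps by (auto simp: nth_eq_iff_index_eq)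
      { fix u assume "u \<in> set (f i)" "u \<in> set (f i')"
        hence False using tk[OF ii(1)] tk[OF ii(2)] ii(3) by metis }
      then show "set (f i) \<inter> set (f i') = {}" by blast
    qed
  qed simp
  have mem: "\<And>u. u \<in> set (T_paths m) \<Longrightarrow> \<exists>i<2^k. u \<in> set (f i)"
    unfolding TP ps(3) by auto
  show "\<forall>u\<in>set (T_paths m). u \<noteq> [] \<and> length u \<le> Suc k"
  proof
    fix u assume "u \<in> set (T_paths m)"
    then obtain i where "i < 2^k" "u \<in> set (f i)" using mem by blast
    then show "u \<noteq> [] \<and> length u \<le> Suc k" using lenps[of i] k1 unfolding f_def
      by (auto split: if_splits)
  qed
  show "\<forall>u\<in>set (T_paths m). \<forall>v\<in>set (T_paths m). \<forall>ds. v = u @ ds \<longrightarrow> ds = []"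
  proof (intro ballI allI impI)
    fix u v ds assume u: "u \<in> set (T_paths m)" and v: "v \<in> set (T_paths m)" and vu: "v = u @ ds"
    obtain i where i: "i < 2^k" "u \<in> set (f i)" using mem u by blast
    obtain i' where i': "i' < 2^k" "v \<in> set (f i')" using mem v by blast
    have "take k v = take k u" using vu i lenps unfolding f_def by (auto split: if_splits)
    hence "ps ! i = ps ! i'" using tk i i' by metis
    hence "i = i'" using i i' ps by (simp add: nth_eq_iff_index_eq)
    then show "ds = []" using i i' vu unfolding f_def by (auto split: if_splits)
  qed
qed



lemma sum_pow2: "(\<Sum>i\<le>n. (2::nat) ^ i) + 1 = 2 ^ Suc n"
  by (induction n) auto

lemma Tpath_props:
  assumes "m \<ge> 2"
  shows "\<forall>j\<in>{1..m}. Tpath m j \<in> set (T_paths m)" "inj_on (Tpath m) {1..m}"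
proof -
  have L: "length (T_paths m) = m" "distinct (T_paths m)" using T_paths_props[OF assms] by auto
  show "\<forall>j\<in>{1..m}. Tpath m j \<in> set (T_paths m)" unfolding Tpath_def using L by auto
  show "inj_on (Tpath m) {1..m}" unfolding Tpath_def inj_on_def using L
    by (auto simp: nth_eq_iff_index_eq)
qed

lemma card_nodes:
  assumes "m \<ge> 2"
  shows "card {p. \<exists>j\<in>{1..m}. \<exists>ds. Tpath m j = p @ ds} < 4 * m"
    "finite {p. \<exists>j\<in>{1..m}. \<exists>ds. Tpath m j = p @ ds}"
proof -
  define k where "k = tlog m"
  have P: "2 ^ k \<le> m" "\<forall>u\<in>set (T_paths m). u \<noteq> [] \<and> length u \<le> Suc k"
    using T_paths_props[OF assms] unfolding k_def by auto
  have sub: "{p. \<exists>j\<in>{1..m}. \<exists>ds. Tpath m j = p @ ds} \<subseteq> {xs. set xs \<subseteq> (UNIV::bool set) \<and> length xs \<le> Suc k}"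
    using P(2) Tpath_props(1)[OF assms] by fastforce
  have "card {xs. set xs \<subseteq> (UNIV::bool set) \<and> length xs \<le> Suc k} = (\<Sum>i\<le>Suc k. 2 ^ i)"
    by (subst card_lists_length_le) auto
  also have "\<dots> < 2 ^ Suc (Suc k)" using sum_pow2[of "Suc k"] by linarith
  also have "\<dots> \<le> 4 * m" using P(1) by simp
  finally have "card {xs. set xs \<subseteq> (UNIV::bool set) \<and> length xs \<le> Suc k} < 4 * m" .
  moreover have "finite {xs. set xs \<subseteq> (UNIV::bool set) \<and> length xs \<le> Suc k}"
    by (rule finite_lists_length_le) auto
  ultimately show "card {p. \<exists>j\<in>{1..m}. \<exists>ds. Tpath m j = p @ ds} < 4 * m"
    "finite {p. \<exists>j\<in>{1..m}. \<exists>ds. Tpath m j = p @ ds}"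
    using card_mono[OF _ sub] finite_subset[OF sub] by auto
qed



lemma sym_simps[simp]: "val (v, l, r, bp) = v" "lpoint (v, l, r, bp) = l"
  "rpoint (v, l, r, bp) = r" "bpoint (v, l, r, bp) = bp"
  by (auto simp: val_def lpoint_def rpoint_def bpoint_def)

lemma completion:
  assumes m8: "m \<ge> 8" and n16: "n \<ge> 16" and Qf: "finite Q" and Qc: "8 * card Q \<le> n * m"
    and z: "\<forall>j\<in>{1..m}. z j \<in> {1..n}"
    and b: "b \<in> {1..m}" and nq: "(z b, b) \<notin> Q"
  shows "\<exists>y\<in>inputs n m. (\<forall>c\<in>Q. y c = X n m z c) \<and> g n m y"
proof -
  define Tp where "Tp = Tpath m"
  have m2: "m \<ge> 2" using m8 by simp
  have TPS: "\<forall>u\<in>set (T_paths m). u \<noteq> []"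
     "\<forall>u\<in>set (T_paths m). \<forall>v\<in>set (T_paths m). \<forall>ds. v = u @ ds \<longrightarrow> ds = []"
    using T_paths_props[OF m2] by auto
  have Tin: "\<forall>j\<in>{1..m}. Tp j \<in> set (T_paths m)" and Tinj: "inj_on Tp {1..m}"
    using Tpath_props[OF m2] unfolding Tp_def by auto
  have Tne: "\<And>j. j \<in> {1..m} \<Longrightarrow> Tp j \<noteq> []" using Tin TPS by auto
  have Tpf: "\<And>i j ds. i\<in>{1..m} \<Longrightarrow> j\<in>{1..m} \<Longrightarrow> Tp j = Tp i @ ds \<Longrightarrow> ds = []"
    using Tin TPS by blast
  define a where "a = (z b, b)"
  define B where "B = {1..m} - {b}"
  define F where "F = {j\<in>B. \<forall>i\<in>{1..n}. (i,j) \<in> Q}"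
  define A where "A = B - F"
  define lf where "lf j = (if j \<in> F then (z j, j) else (SOME i. i\<in>{1..n} \<and> (i,j) \<notin> Q, j))" for j
  have Bm: "B \<subseteq> {1..m}" "b \<notin> B" unfolding B_def by auto
  have lf_props: "lf j \<in> grid n m \<and> snd (lf j) = j \<and> (lf j \<in> Q \<longrightarrow> j \<in> F)" if j: "j \<in> B" for j
  proof (cases "j \<in> F")
    case True then show ?thesis using z j unfolding lf_def grid_def B_def by auto
  next
    case False
    then have "\<exists>i. i \<in> {1..n} \<and> (i,j) \<notin> Q" using j unfolding F_def by auto
    from someI_ex[OF this] show ?thesis using False j unfolding lf_def grid_def B_def by auto
  qed
  have a_props: "a \<in> grid n m" "snd a = b" "a \<notin> Q"
    using z b nq unfolding a_def grid_def by auto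
  have nF: "n * card F \<le> card Q"
  proof -
    have "{1..n} \<times> F \<subseteq> Q" unfolding F_def by auto
    then have "card ({1..n} \<times> F) \<le> card Q" using Qf by (rule card_mono[rotated])
    then show ?thesis by (simp add: card_cartesian_product)
  qed
  have fB: "finite B" "card B = m - 1" using b unfolding B_def by auto
  have FB: "F \<subseteq> B" unfolding F_def by auto
  have "8 * n * card F \<le> n * m" using nF Qc by linarith
  hence "n * (8 * card F) \<le> n * m" by (simp add: algebra_simps)
  hence F8: "8 * card F \<le> m" using n16 by simp
  have cA: "card A = card B - card F" unfolding A_def using FB fB by (simp add: card_Diff_subset finite_subset)
  have "m div 2 \<le> card A" using cA fB F8 m8 by linarith
  then obtain G0 where G0: "G0 \<subseteq> A" "card G0 = m div 2" "finite G0"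
    by (rule obtain_subset_with_card_n)
  have G0B: "G0 \<subseteq> B" "G0 \<inter> F = {}" using G0 unfolding A_def by auto
  define N where "N = {p. \<exists>j\<in>{1..m}. \<exists>ds. Tp j = p @ ds}"
  define L where "L = Tp ` B"
  define I where "I = N - {[]} - L"
  define C where "C = ({1..n} \<times> B - Q) - lf ` B"
  have cN: "card N < 4 * m" using card_nodes[OF m2] unfolding N_def Tp_def by simp
  have fN: "finite N" using card_nodes(2)[OF m2] unfolding N_def Tp_def by simp
  have "I \<subseteq> N" unfolding I_def by auto
  hence cI: "card I < 4 * m" using cN card_mono[OF fN] by (meson le_less_trans)
  have fC: "finite C" unfolding C_def using fB by auto
  have cC: "4 * m \<le> card C"
  proof -
    have c1: "card ({1..n} \<times> B) = n * card B" using fB by (simp add: card_cartesian_product)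
    have c2': "card ({1..n} \<times> B) - card Q \<le> card ({1..n} \<times> B - Q)"
      using Qf by (rule diff_card_le_card_Diff)
    have c2: "card ({1..n} \<times> B) \<le> card ({1..n} \<times> B - Q) + card Q" using c2' by linarith
    have c3': "card ({1..n} \<times> B - Q) - card (lf ` B) \<le> card C"
      unfolding C_def using fB by (intro diff_card_le_card_Diff) auto
    have c3: "card ({1..n} \<times> B - Q) \<le> card C + card (lf ` B)" using c3' by linarith
    have c4: "card (lf ` B) \<le> card B" using card_image_le[OF fB(1), of lf] by simp
    have e0: "card B + 1 = m" using fB m8 by simp
    have e1: "n * card B + n = n * m" using e0 by (metis add_mult_distrib2 mult.right_neutral)
    have e2: "8 * n \<le> n * m" using m8 by simp
    have e3: "16 * m \<le> n * m" using n16 by simp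
    have "8 * card C + 8 * card (lf ` B) + 8 * card Q \<ge> 8 * (n * card B)" using c1 c2 c3 by linarith
    then show ?thesis using c4 e0 e1 e2 e3 Qc by linarith
  qed
  have fI: "finite I" using fN unfolding I_def by auto
  obtain h where h: "h ` I \<subseteq> C" "inj_on h I"
    using card_le_inj[OF fI fC] cI cC by auto
  define ph where "ph p = (if p = [] then a else if p \<in> L then lf (inv_into B Tp p) else h p)" for p
  have injB: "inj_on Tp B" using Tinj Bm by (metis inj_on_subset)
  have ph_leaf: "ph (Tp j) = lf j" if "j \<in> B" for j
    using that Tne Bm injB unfolding ph_def L_def by (auto simp: inv_into_f_f)
  have N_pre: "p \<in> N" if "p @ ds \<in> N" for p ds using that unfolding N_def by auto
  have N_T: "Tp j \<in> N" if "j \<in> {1..m}" for j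
    unfolding N_def by (rule CollectI, rule bexI[of _ j]) (use that in auto)
  have N_nil: "[] \<in> N" unfolding N_def using m2 by (intro CollectI bexI[of _ 1]) auto
  have ph2: "ph p \<in> grid n m \<and> snd (ph p) \<noteq> b \<and> (ph p \<in> Q \<longrightarrow> p \<in> L)" if "p \<in> N - {[]}" for p
  proof (cases "p \<in> L")
    case True
    then obtain j where j: "j \<in> B" "p = Tp j" unfolding L_def by auto
    then show ?thesis using ph_leaf[OF j(1)] lf_props[OF j(1)] Bm True by auto
  next
    case False
    then have "p \<in> I" using that unfolding I_def by auto
    then have "h p \<in> C" using h by auto
    then show ?thesis using False that Bm unfolding ph_def C_def grid_def by auto
  qed
  have ph_inj: "inj_on ph (N - {[]})"
  proof (rule inj_onI)
    fix p q assume p: "p \<in> N - {[]}" and q: "q \<in> N - {[]}" and e: "ph p = ph q"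
    show "p = q"
    proof (cases "p \<in> L"; cases "q \<in> L")
      assume "p \<in> L" "q \<in> L"
      then obtain i j where ij: "i \<in> B" "p = Tp i" "j \<in> B" "q = Tp j" unfolding L_def by auto
      then have "snd (lf i) = snd (lf j)" using e ph_leaf by simp
      then have "i = j" using lf_props ij by simp
      then show ?thesis using ij by simp
    next
      assume "p \<notin> L" "q \<notin> L"
      then have "p \<in> I" "q \<in> I" using p q unfolding I_def by auto
      then show ?thesis using e h(2) \<open>p \<notin> L\<close> \<open>q \<notin> L\<close> p q unfolding ph_def
        by (auto dest: inj_onD)
    next
      assume "p \<in> L" "q \<notin> L"
      then obtain i where i: "i \<in> B" "p = Tp i" unfolding L_def by auto
      have "q \<in> I" using q \<open>q \<notin> L\<close> unfolding I_def by auto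
      then have "h q \<in> C" using h by auto
      moreover have "ph q = h q" using q \<open>q \<notin> L\<close> unfolding ph_def by auto
      ultimately have "ph q \<notin> lf ` B" unfolding C_def by auto
      moreover have "ph p \<in> lf ` B" using ph_leaf[OF i(1)] i by auto
      ultimately show ?thesis using e by auto
    next
      assume "p \<notin> L" "q \<in> L"
      then obtain i where i: "i \<in> B" "q = Tp i" unfolding L_def by auto
      have "p \<in> I" using p \<open>p \<notin> L\<close> unfolding I_def by auto
      then have "h p \<in> C" using h by auto
      moreover have "ph p = h p" using p \<open>p \<notin> L\<close> unfolding ph_def by auto
      ultimately have "ph p \<notin> lf ` B" unfolding C_def by auto
      moreover have "ph q \<in> lf ` B" using ph_leaf[OF i(1)] i by auto
      ultimately show ?thesis using e by auto
    qed
  qed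
  define lp where "lp p = (if p @ [False] \<in> N then Some (ph (p @ [False])) else None)" for p
  define rp where "rp p = (if p @ [True] \<in> N then Some (ph (p @ [True])) else None)" for p
  define y where "y c = (if c \<notin> grid n m then zc else if c \<in> Q then X n m z c
     else if c = a then (True, lp [], rp [], None)
     else if c \<in> ph ` (N - {[]}) then
       (False, lp (inv_into (N - {[]}) ph c), rp (inv_into (N - {[]}) ph c),
        if inv_into (N - {[]}) ph c \<in> Tp ` G0 then Some a else None)
     else if snd c = b then one_null else zc)" for c
  have ya: "y a = (True, lp [], rp [], None)" using a_props unfolding y_def by auto
  have ynode: "y (ph p) = (False, lp p, rp p, if p \<in> Tp ` G0 then Some a else None)"
    if p: "p \<in> N - {[]}" and nQ: "ph p \<notin> Q" for p
  proof -
    have "ph p \<noteq> a" using ph2[OF p] a_props by auto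
    then show ?thesis using ph2[OF p] nQ p ph_inj unfolding y_def by (auto simp: inv_into_f_f)
  qed
  have follow_ph: "\<forall>p. p \<in> N \<longrightarrow> p @ ds \<in> N \<longrightarrow> follow y (ph p) ds = Some (ph (p @ ds))" for ds
  proof (induction ds)
    case Nil then show ?case by simp
  next
    case (Cons d ds)
    show ?case
    proof (intro allI impI)
      fix p assume pN: "p \<in> N" and pdN: "p @ d # ds \<in> N"
      have pd: "p @ [d] \<in> N" using pdN N_pre[of "p @ [d]" ds] by simp
      have ptr: "(if d then rpoint (y (ph p)) else lpoint (y (ph p))) = Some (ph (p @ [d]))"
      proof (cases "p = []")
        case True
        have "ph p = a" using True unfolding ph_def by simp
        then show ?thesis using ya pd True unfolding lp_def rp_def by (cases d) auto
      next
        case False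
        have "ph p \<notin> Q"
        proof
          assume "ph p \<in> Q"
          then have "p \<in> L" using ph2 pN False by auto
          then obtain j where j: "j \<in> B" "p = Tp j" unfolding L_def by auto
          obtain j' ds' where "j' \<in> {1..m}" "Tp j' = p @ [d] @ ds'" using pd unfolding N_def by auto
          then show False using Tpf[of j j' "[d] @ ds'"] j Bm by auto
        qed
        then show ?thesis using ynode[of p] pN False pd unfolding lp_def rp_def by (cases d) auto
      qed
      have "follow y (ph (p @ [d])) ds = Some (ph (p @ [d] @ ds))"
        using Cons.IH pd pdN by simp
      then show "follow y (ph p) (d # ds) = Some (ph (p @ d # ds))"
        using ptr by (cases d) auto
    qed
  qed
  have follow_leaf: "follow y a (Tpath m j) = Some (lf j)" if j: "j \<in> B" for j
  proof -
    have "follow y (ph []) ([] @ Tp j) = Some (ph ([] @ Tp j))"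
      using follow_ph[of "Tp j"] N_nil N_T[of j] j Bm by auto
    moreover have "ph [] = a" by (simp add: ph_def)
    ultimately show ?thesis using ph_leaf[OF j] unfolding Tp_def by simp
  qed
  have leafval: "\<not> val (y (lf j)) \<and> bpoint (y (lf j)) = (if j \<in> G0 then Some a else None)"
    if j: "j \<in> B" for j
  proof (cases "lf j \<in> Q")
    case True
    then have "j \<in> F" using lf_props[OF j] by simp
    then have "lf j = (z j, j)" "j \<notin> G0" using G0B unfolding lf_def by auto
    then show ?thesis using True lf_props[OF j] unfolding y_def X_def zc_def by auto
  next
    case False
    have TN: "Tp j \<in> N - {[]}" using N_T Tne j Bm by auto
    have "Tp j \<in> Tp ` G0 \<longleftrightarrow> j \<in> G0" using Tinj G0B Bm j by (auto dest: inj_onD)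
    then show ?thesis using ynode[OF TN] False ph_leaf[OF j] by auto
  qed
  have colb: "y c = one_null" if "c \<in> grid n m" "snd c = b" "c \<noteq> a" for c
  proof (cases "c \<in> Q")
    case True
    have "fst c \<noteq> z b" using that unfolding a_def by (cases c) auto
    then show ?thesis using True that unfolding y_def X_def by auto
  next
    case False
    have "c \<notin> ph ` (N - {[]})" using ph2 that by auto
    then show ?thesis using False that unfolding y_def by auto
  qed
  have yin: "y \<in> inputs n m"
  proof -
    have vp: "valid_ptr n m (lp p)" "valid_ptr n m (rp p)" for p
      using ph2 unfolding lp_def rp_def valid_ptr_def by auto
    have va: "valid_ptr n m (Some a)" "valid_ptr n m None" using a_props unfolding valid_ptr_def by auto
    have X0: "lpoint (X n m z c) = None" "rpoint (X n m z c) = None" "bpoint (X n m z c) = None" for c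
      unfolding X_def zc_def one_null_def by auto
    have Z0: "lpoint zc = None" "rpoint zc = None" "bpoint zc = None"
      "lpoint one_null = None" "rpoint one_null = None" "bpoint one_null = None"
      unfolding zc_def one_null_def by auto
    have l: "valid_ptr n m (lpoint (y c))" for c
      unfolding y_def by (simp only: if_split[of "valid_ptr n m \<circ> lpoint", simplified comp_def]) (simp add: X0 Z0 vp va)
    have r: "valid_ptr n m (rpoint (y c))" for c
      unfolding y_def by (simp only: if_split[of "valid_ptr n m \<circ> rpoint", simplified comp_def]) (simp add: X0 Z0 vp va)
    have bb: "valid_ptr n m (bpoint (y c))" for c
      unfolding y_def by (simp only: if_split[of "valid_ptr n m \<circ> bpoint", simplified comp_def]) (simp add: X0 Z0 vp va)
    have o: "y c = (False, None, None, None)" if "c \<notin> grid n m" for c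
      using that unfolding y_def zc_def by simp
    show ?thesis unfolding inputs_def using l r bb o by blast
  qed
  have agree: "\<forall>c\<in>Q. y c = X n m z c"
  proof
    fix c assume "c \<in> Q"
    then show "y c = X n m z c" unfolding y_def by (cases "c \<in> grid n m") (simp_all add: X_def)
  qed
  have gy: "g n m y"
    unfolding g_def
  proof (intro exI conjI)
    show "b \<in> {1..m}" using b .
    show "marked_col n y b" unfolding marked_col_def
    proof
      fix i assume i: "i \<in> {1..n}"
      have "(i, b) \<in> grid n m" using i b unfolding grid_def by auto
      then show "val (y (i, b))" using colb ya a_props
        by (cases "(i,b) = a") (auto simp: one_null_def)
    qed
    show "\<forall>b'\<in>{1..m}. marked_col n y b' \<longrightarrow> b' = b"
    proof (intro ballI impI; rule ccontr)
      fix b' assume b': "b' \<in> {1..m}" "marked_col n y b'" "b' \<noteq> b"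
      then have jB: "b' \<in> B" unfolding B_def by auto
      obtain i where "lf b' = (i, b')" using lf_props[OF jB] by (cases "lf b'") auto
      moreover have "i \<in> {1..n}" using lf_props[OF jB] calculation unfolding grid_def by auto
      ultimately show False using b'(2) leafval[OF jB] unfolding marked_col_def by auto
    qed
    show "a \<in> grid n m" "snd a = b" using a_props by auto
    show "y a \<noteq> one_null"
    proof -
      have "Tp 1 \<noteq> []" using Tne m2 by auto
      then obtain d rest where "Tp 1 = d # rest" by (cases "Tp 1") auto
      then have "[d] \<in> N" unfolding N_def using m2 by (intro CollectI bexI[of _ 1]) auto
      then show ?thesis using ya unfolding lp_def rp_def one_null_def by (cases d) auto
    qed
    show "\<forall>a'\<in>grid n m. snd a' = b \<and> y a' \<noteq> one_null \<longrightarrow> a' = a"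
      using colb by blast
    show "\<forall>j\<in>{1..m} - {b}. \<exists>l. follow y a (Tpath m j) = Some l \<and> snd l = j \<and> \<not> val (y l)"
      using follow_leaf lf_props leafval unfolding B_def by blast
    have "{j \<in> {1..m} - {b}. bpoint (y (the (follow y a (Tpath m j)))) = Some a} = G0"
    proof (rule set_eqI)
      fix j
      show "j \<in> {j \<in> {1..m} - {b}. bpoint (y (the (follow y a (Tpath m j)))) = Some a} \<longleftrightarrow> j \<in> G0"
      proof (cases "j \<in> B")
        case True
        then show ?thesis using follow_leaf[OF True] leafval[OF True] unfolding B_def by auto
      next
        case False
        then show ?thesis using G0B unfolding B_def by auto
      qed
    qed
    then show "card {j \<in> {1..m} - {b}. bpoint (y (the (follow y a (Tpath m j)))) = Some a} = m div 2"
      using G0 by simp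
  qed
  show ?thesis using yin agree gy by blast
qed



lemma choose_fact_le: "(K choose m) * fact m \<le> (K::nat) ^ m"
proof (cases "m \<le> K")
  case True
  have e: "fact m * fact (K - m) * (K choose m) = (fact K :: nat)" using binomial_fact_lemma[OF True] .
  have e2: "(fact K :: nat) = ((K choose m) * fact m) * fact (K - m)" using e by (simp only: mult_ac)
  have "fact K div fact (K - m) = (K choose m) * (fact m :: nat)"
    unfolding e2 by (rule nonzero_mult_div_cancel_right) simp
  then show ?thesis using fact_div_fact_le_pow[OF True] by simp
next
  case False
  then show ?thesis by (simp add: binomial_eq_0)
qed

lemma pow_le_fact_exp: "real m ^ m \<le> fact m * exp (real m)"
proof -
  have s: "(\<lambda>i. real m ^ i /\<^sub>R fact i) sums exp (real m)" by (rule exp_converges)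
  have "sum (\<lambda>i. real m ^ i /\<^sub>R fact i) {m} \<le> suminf (\<lambda>i. real m ^ i /\<^sub>R fact i)"
    by (rule sum_le_suminf[OF sums_summable[OF s]]) auto
  then have t: "real m ^ m /\<^sub>R fact m \<le> exp (real m)" using sums_unique[OF s] by simp
  have "real m ^ m /\<^sub>R fact m = real m ^ m / fact m" by (simp add: divide_inverse_commute)
  with t have "real m ^ m / fact m \<le> exp (real m)" by simp
  then have "real m ^ m \<le> exp (real m) * fact m" by (simp add: pos_divide_le_eq)
  then show ?thesis by (simp only: mult.commute)
qed

lemma exp_m_le: "exp (real m) \<le> 3 ^ m"
proof -
  have "exp (real m) = exp 1 ^ m" by (metis exp_of_nat_mult mult.right_neutral)
  also have "\<dots> \<le> 3 ^ m" by (rule power_mono[OF exp_le]) simp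
  finally show ?thesis .
qed

lemma choose_bound:
  assumes "8 * K \<le> n * m" "m \<ge> 1"
  shows "2 * (K choose m) \<le> n ^ m"
proof -
  have h1: "real (K choose m) * fact m \<le> real K ^ m"
    using choose_fact_le[of K m] by (metis of_nat_fact of_nat_le_iff of_nat_mult of_nat_power)
  have mpos: "real m > 0" using assms by simp
  have "real (K choose m) * real m ^ m \<le> real (K choose m) * (fact m * exp (real m))"
    by (intro mult_left_mono pow_le_fact_exp) auto
  also have "\<dots> = (real (K choose m) * fact m) * exp (real m)" by simp
  also have "\<dots> \<le> real K ^ m * 3 ^ m"
    by (intro mult_mono h1 exp_m_le) auto
  also have "\<dots> \<le> (real n * real m / 8) ^ m * 3 ^ m"
  proof -
    have "8 * real K \<le> real n * real m" using assms(1)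
      by (metis of_nat_le_iff of_nat_mult of_nat_numeral)
    then have "real K \<le> real n * real m / 8" by linarith
    then show ?thesis by (intro mult_right_mono power_mono) auto
  qed
  also have "\<dots> = ((real n * (3/8)) * real m) ^ m"
    unfolding power_mult_distrib[symmetric] by (simp add: mult_ac)
  also have "\<dots> = (real n ^ m * (3/8) ^ m) * real m ^ m"
    by (simp only: power_mult_distrib)
  finally have "real (K choose m) * real m ^ m \<le> (real n ^ m * (3/8) ^ m) * real m ^ m" .
  then have "real (K choose m) \<le> real n ^ m * (3/8) ^ m"
    using mpos by (meson mult_right_le_imp_le zero_less_power)
  also have "\<dots> \<le> real n ^ m * (3/8)"
  proof -
    have "(3/8::real) ^ m \<le> (3/8) ^ 1" using assms(2) by (intro power_decreasing) auto
    then show ?thesis by (intro mult_left_mono) auto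
  qed
  finally have "2 * real (K choose m) \<le> real (n ^ m)" by simp
  then show ?thesis by linarith
qed



lemma X_in: "X n m z \<in> inputs n m"
  unfolding inputs_def X_def valid_ptr_def zc_def one_null_def by (auto simp: lpoint_def rpoint_def bpoint_def)

lemma g_X: assumes "\<forall>j\<in>{1..m}. z j \<in> {1..n}" shows "\<not> g n m (X n m z)"
proof
  assume "g n m (X n m z)"
  then obtain b where b: "b \<in> {1..m}" "marked_col n (X n m z) b" unfolding g_def by blast
  have "z b \<in> {1..n}" using assms b by auto
  then have "\<not> val (X n m z (z b, b))" using b unfolding X_def grid_def zc_def by (auto simp: val_def)
  then show False using b \<open>z b \<in> {1..n}\<close> unfolding marked_col_def by auto
qed

lemma tree_sum:
  assumes n16: "n \<ge> 16" and m16: "m \<ge> 16" and corr: "\<forall>x\<in>inputs n m. dt_eval t x = g n m x"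
  defines "K \<equiv> n * m div 8" and "Z \<equiv> PiE {1..m} (\<lambda>_. {1..n})"
  shows "K * card Z \<le> 2 * (\<Sum>z\<in>Z. dt_cost t (X n m z))"
proof -
  have fZ: "finite Z" unfolding Z_def by (auto intro: finite_PiE)
  have cZ: "card Z = n ^ m" unfolding Z_def by (simp add: card_PiE)
  have zr: "\<forall>j\<in>{1..m}. z j \<in> {1..n}" if "z \<in> Z" for z using that unfolding Z_def by auto
  have good: "\<forall>j\<in>{1..m}. (z j, j) \<in> set (take K (qs t (X n m z)))"
    if z: "z \<in> Z" and lt: "dt_cost t (X n m z) < K" for z
  proof (rule ccontr)
    assume "\<not> (\<forall>j\<in>{1..m}. (z j, j) \<in> set (take K (qs t (X n m z))))"
    then obtain b where b: "b \<in> {1..m}" "(z b, b) \<notin> set (qs t (X n m z))"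
      using lt length_qs[of t "X n m z"] by auto
    have "card (set (qs t (X n m z))) \<le> dt_cost t (X n m z)"
      using card_length length_qs by metis
    then have "8 * card (set (qs t (X n m z))) \<le> n * m" using lt unfolding K_def by linarith
    then obtain y where y: "y \<in> inputs n m" "\<forall>c\<in>set (qs t (X n m z)). y c = X n m z c" "g n m y"
      using completion[of m n "set (qs t (X n m z))" z b] m16 n16 zr[OF z] b by auto
    have "dt_eval t y = dt_eval t (X n m z)" using qs_agree y(2) by blast
    moreover have "dt_eval t y = g n m y" using corr y(1) by blast
    moreover have "dt_eval t (X n m z) = g n m (X n m z)" using corr X_in by blast
    ultimately show False using g_X[OF zr[OF z]] y(3) by simp
  qed
  define Gd where "Gd = {z\<in>Z. dt_cost t (X n m z) < K}"
  define S' where "S' = {z\<in>Z. \<forall>j\<in>{1..m}. (z j, j) \<in> set (take K (qs t (X n m z)))}"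
  have sub: "Gd \<subseteq> S'" unfolding Gd_def S'_def using good by auto
  have fS: "finite S'" using fZ unfolding S'_def by simp
  have c2: "card S' \<le> K choose card {1..m}" unfolding S'_def
    by (rule count_lemma[where w="\<lambda>_. undefined"]) (use fZ in \<open>auto simp: Z_def PiE_def extensional_def\<close>)
  have c1: "card Gd \<le> card S'" by (rule card_mono[OF fS sub])
  have cG: "card Gd \<le> K choose m" using c1 c2 by simp
  have "2 * (K choose m) \<le> n ^ m" by (rule choose_bound) (use m16 in \<open>auto simp: K_def\<close>)
  then have cG2: "2 * card Gd \<le> card Z" using cG cZ by linarith
  have fG: "finite Gd" "Gd \<subseteq> Z" using fZ unfolding Gd_def by auto
  have "(\<Sum>z\<in>Z - Gd. K) \<le> (\<Sum>z\<in>Z - Gd. dt_cost t (X n m z))"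
    by (rule sum_mono) (auto simp: Gd_def)
  also have "\<dots> \<le> (\<Sum>z\<in>Z. dt_cost t (X n m z))"
    by (rule sum_mono2) (use fZ in auto)
  finally have s: "K * (card Z - card Gd) \<le> (\<Sum>z\<in>Z. dt_cost t (X n m z))"
    using card_Diff_subset[OF fG(1) fG(2)] by (simp add: mult.commute)
  have "K * card Z \<le> K * (2 * (card Z - card Gd))" using cG2 by (intro mult_le_mono2) linarith
  also have "\<dots> = 2 * (K * (card Z - card Gd))" by simp
  finally show ?thesis using s by linarith
qed

theorem theorem8:
  shows "\<exists>c::real. c > 0 \<and> (\<exists>N::nat. \<forall>n m::nat. N \<le> n \<longrightarrow> N \<le> m \<longrightarrow> even m \<longrightarrow>
           ennreal (c * real n * real m) \<le> R0 (inputs n m) (g n m))"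
proof (intro exI conjI allI impI)
  show "(1/64::real) > 0" by simp
  fix n m :: nat assume n16: "16 \<le> n" and m16: "16 \<le> m" and "even m"
  define K where "K = n * m div 8"
  define Z where "Z = PiE {1..m} (\<lambda>_::nat. {1..n::nat})"
  have fZ: "finite Z" unfolding Z_def by (auto intro: finite_PiE)
  have cZ: "card Z = n ^ m" unfolding Z_def by (simp add: card_PiE)
  have cZp: "card Z > 0" using cZ n16 by simp
  have Kb: "1/64 * real n * real m \<le> real K / 2"
  proof -
    have "n * m div 8 * 8 + n * m mod 8 = n * m" by (rule div_mult_mod_eq)
    moreover have "n * m mod 8 < 8" by simp
    ultimately have "n * m \<le> 8 * K + 7" unfolding K_def by linarith
    then have "real (n * m) \<le> real (8 * K + 7)" by (simp only: of_nat_le_iff)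
    then have "real n * real m \<le> 8 * real K + 7" by simp
    moreover have "real n * real m \<ge> 256"
    proof -
      have "real n \<ge> 16" "real m \<ge> 16" using n16 m16 by auto
      then have "real n * real m \<ge> 16 * 16" by (intro mult_mono) auto
      then show ?thesis by simp
    qed
    ultimately show ?thesis by linarith
  qed
  show "ennreal (1/64 * real n * real m) \<le> R0 (inputs n m) (g n m)"
    unfolding R0_def
  proof (rule INF_greatest)
    fix D :: "dtree pmf"
    assume "D \<in> {D. \<forall>t\<in>set_pmf D. \<forall>x\<in>inputs n m. dt_eval t x = g n m x}"
    then have Dc: "\<And>t. t \<in> set_pmf D \<Longrightarrow> \<forall>x\<in>inputs n m. dt_eval t x = g n m x" by auto
    define S where "S = (SUP x\<in>inputs n m. \<integral>\<^sup>+ t. ennreal (real (dt_cost t x)) \<partial>measure_pmf D)"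
    have up: "(\<integral>\<^sup>+ t. ennreal (real (dt_cost t (X n m z))) \<partial>measure_pmf D) \<le> S" for z
      unfolding S_def by (rule SUP_upper) (rule X_in)
    have "(\<Sum>z\<in>Z. \<integral>\<^sup>+ t. ennreal (real (dt_cost t (X n m z))) \<partial>measure_pmf D)
        = (\<integral>\<^sup>+ t. (\<Sum>z\<in>Z. ennreal (real (dt_cost t (X n m z)))) \<partial>measure_pmf D)"
      by (rule nn_integral_sum[symmetric]) simp
    also have "\<dots> \<ge> (\<integral>\<^sup>+ t. ennreal (real K * real (card Z) / 2) \<partial>measure_pmf D)"
    proof (rule nn_integral_mono_AE)
      show "AE t in measure_pmf D. ennreal (real K * real (card Z) / 2) \<le> (\<Sum>z\<in>Z. ennreal (real (dt_cost t (X n m z))))"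
      proof (rule AE_pmfI)
        fix t assume "t \<in> set_pmf D"
        have ts: "K * card Z \<le> 2 * (\<Sum>z\<in>Z. dt_cost t (X n m z))"
          unfolding K_def Z_def by (rule tree_sum[OF n16 m16 Dc[OF \<open>t \<in> set_pmf D\<close>]])
        then have "real (K * card Z) \<le> real (2 * (\<Sum>z\<in>Z. dt_cost t (X n m z)))"
          by (simp only: of_nat_le_iff)
        then have "real K * real (card Z) \<le> 2 * real (\<Sum>z\<in>Z. dt_cost t (X n m z))"
          by (simp only: of_nat_mult of_nat_numeral)
        then have "real K * real (card Z) / 2 \<le> real (\<Sum>z\<in>Z. dt_cost t (X n m z))"
          by linarith
        then have "ennreal (real K * real (card Z) / 2) \<le> ennreal (real (\<Sum>z\<in>Z. dt_cost t (X n m z)))"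
          by (rule ennreal_leI)
        moreover have "(\<Sum>z\<in>Z. ennreal (real (dt_cost t (X n m z)))) = ennreal (real (\<Sum>z\<in>Z. dt_cost t (X n m z)))"
          by (simp add: of_nat_sum)
        ultimately show "ennreal (real K * real (card Z) / 2) \<le> (\<Sum>z\<in>Z. ennreal (real (dt_cost t (X n m z))))"
          by simp
      qed
    qed
    finally have lo: "ennreal (real K * real (card Z) / 2) \<le> (\<Sum>z\<in>Z. \<integral>\<^sup>+ t. ennreal (real (dt_cost t (X n m z))) \<partial>measure_pmf D)"
      by (simp add: measure_pmf.emeasure_space_1)
    have "(\<Sum>z\<in>Z. \<integral>\<^sup>+ t. ennreal (real (dt_cost t (X n m z))) \<partial>measure_pmf D) \<le> of_nat (card Z) * S"
      by (rule sum_bounded_above) (rule up)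
    note up2 = this
    have eq: "ennreal (real (card Z)) * ennreal (real K / 2) = ennreal (real K * real (card Z) / 2)"
    proof -
      have r: "real K * real (card Z) / 2 = real (card Z) * (real K / 2)" by simp
      show ?thesis unfolding r by (rule ennreal_mult[symmetric]) auto
    qed
    have "ennreal (real (card Z)) * ennreal (real K / 2) \<le> ennreal (real (card Z)) * S"
    proof -
      have "ennreal (real (card Z)) * ennreal (real K / 2) \<le> of_nat (card Z) * S"
        using lo up2 unfolding eq[symmetric] by (rule order_trans)
      then show ?thesis by (simp only: ennreal_of_nat_eq_real_of_nat)
    qed
    moreover have c0: "ennreal (real (card Z)) \<noteq> 0" using cZp by simp
    moreover have ct: "ennreal (real (card Z)) \<noteq> top" by simp
    ultimately have "ennreal (real K / 2) \<le> S" using ennreal_mult_le_mult_iff[OF c0 ct] by simp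
    moreover have "ennreal (1/64 * real n * real m) \<le> ennreal (real K / 2)"
      using Kb by (rule ennreal_leI)
    ultimately show "ennreal (1/64 * real n * real m) \<le> S" by (rule order_trans[rotated])
  qed
qed


end
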